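(* Let $n\in\mathbb{N}$ and let $g$ be a nonzero real number. Let $\mathcal{C}=\{q\in\mathbb{R}^n \mid q_1>\dots>q_n\}$ and, for $q\in\mathcal{C}$, $p\in\mathbb{R}^n$, define the $n\times n$ matrices $$Q_{jk}=q_j\delta_{jk},\qquad L_{jk}=p_j\delta_{jk}+\mathrm{i} g\,\frac{1-\delta_{jk}}{q_j-q_k},\qquad j,k=1,\dots,n.$$ Let $A(z)=\det(z\mathbf{1}_n-L)$ and $D(z)=\operatorname{tr}\big(Q\operatorname{adj}(z\mathbf{1}_n-L)\big)$, where $\operatorname{adj}$ denotes the adjugate matrix. Let $\lambda_1>\dots>\lambda_n$ be the eigenvalues of the Hermitian matrix $L$, and let $\phi_1,\dots,\phi_n$ be the angle variables of the rational Calogero--Moser system, i.e. $\phi_k=(UQU^\dagger)_{kk}$ for a unitary matrix $U$ with $ULU^\dagger=\operatorname{diag}(\lambda_1,\dots,\lambda_n)$ (for the Calogero--Moser point $(q,p)$ such $U$ can be chosen so that $UQU^\dagger$ has entries $\phi_j\delta_{jk}-\mathrm{i} g\frac{1-\delta_{jk}}{\lambda_j-\lambda_k}$). Then for every $(q,p)\in\mathcal{C}\times\mathbb{R}^n$ and every $k=1,\dots,n$, $$\mu_k:=\frac{D(\lambda_k)}{A'(\lambda_k)}=\phi_k .$$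
   Context: This concerns the rational Calogero--Moser system with Hamiltonian $H=\frac12\sum_j p_j^2+g^2\sum_{j<k}(q_j-q_k)^{-2}$ on the phase space $T^*\mathcal{C}=\{(q,p)\mid q\in\mathcal{C},p\in\mathbb{R}^n\}$ with symplectic form $\sum_j dq_j\wedge dp_j$. The system arises by Hamiltonian reduction of pairs of Hermitian matrices $(X,P)$ with symplectic form $\operatorname{tr}(dX\wedge dP)$ under the conjugation action of $U(n)$ at the moment map value $[X,P]=\mathrm{i} g(vv^\dagger-\mathbf{1}_n)$, $v=(1,\dots,1)^\dagger$; gauge-fixing $X$ diagonal gives $(Q,L)$ above, while gauge-fixing $P$ diagonal gives the pair $\tilde L=\operatorname{diag}(\lambda)$, $\tilde Q_{jk}=\phi_j\delta_{jk}-\mathrm{i} g\frac{1-\delta_{jk}}{\lambda_j-\lambda_k}$, and $(q,p)\mapsto(\phi,\lambda)$ is a canonical transformation (action-angle variables) with $\sum_j d\phi_j\wedge d\lambda_j$ the transformed symplectic form. *)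

theory Defs
  imports Complex_Main "Jordan_Normal_Form.Determinant" "Jordan_Normal_Form.Char_Poly"
begin

definition mtrace :: "complex mat \<Rightarrow> complex" where
  "mtrace A = (\<Sum>i<dim_row A. A $$ (i,i))"

definition ctrans :: "complex mat \<Rightarrow> complex mat" where
  "ctrans U = mat (dim_col U) (dim_row U) (\<lambda>(i,j). cnj (U $$ (j,i)))"

definition unitary_mat :: "nat \<Rightarrow> complex mat \<Rightarrow> bool" where
  "unitary_mat n U \<longleftrightarrow> U \<in> carrier_mat n n \<and> U * ctrans U = 1\<^sub>m n \<and> ctrans U * U = 1\<^sub>m n"

(* Q_{jk} = q_j delta_{jk} (indices 0..n-1) *)
definition CM_Q :: "nat \<Rightarrow> (nat \<Rightarrow> real) \<Rightarrow> complex mat" where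
  "CM_Q n q = mat n n (\<lambda>(j,k). if j = k then complex_of_real (q j) else 0)"

definition CM_L :: "nat \<Rightarrow> real \<Rightarrow> (nat \<Rightarrow> real) \<Rightarrow> (nat \<Rightarrow> real) \<Rightarrow> complex mat" where
  "CM_L n g q p = mat n n (\<lambda>(j,k). if j = k then complex_of_real (p j)
       else \<i> * complex_of_real g / complex_of_real (q j - q k))"

definition CM_A :: "nat \<Rightarrow> real \<Rightarrow> (nat \<Rightarrow> real) \<Rightarrow> (nat \<Rightarrow> real) \<Rightarrow> complex poly" where
  "CM_A n g q p = char_poly (CM_L n g q p)"

definition CM_D :: "nat \<Rightarrow> real \<Rightarrow> (nat \<Rightarrow> real) \<Rightarrow> (nat \<Rightarrow> real) \<Rightarrow> complex \<Rightarrow> complex" where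
  "CM_D n g q p z = mtrace (CM_Q n q * adj_mat (z \<cdot>\<^sub>m 1\<^sub>m n - CM_L n g q p))"

end

theory Submission imports Defs begin

lemma isCont_det:
  fixes A :: "complex \<Rightarrow> complex mat"
  assumes car: "\<And>z. A z \<in> carrier_mat m m"
    and c: "\<And>i j. i < m \<Longrightarrow> j < m \<Longrightarrow> isCont (\<lambda>z. A z $$ (i,j)) x"
  shows "isCont (\<lambda>z. det (A z)) x"
proof -
  have eq: "(\<lambda>z. det (A z)) = (\<lambda>z. \<Sum>p\<in>{p. p permutes {0..<m}}. signof p * (\<Prod>i=0..<m. A z $$ (i, p i)))"
    using det_def'[OF car] by auto
  have "isCont (\<lambda>z. \<Sum>p\<in>{p. p permutes {0..<m}}. signof p * (\<Prod>i=0..<m. A z $$ (i, p i))) x"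
    by (intro continuous_sum continuous_mult continuous_const continuous_prod c)
       (auto simp: permutes_in_image)
  then show ?thesis unfolding eq .
qed

lemma isCont_cofactor:
  fixes L :: "complex mat"
  assumes L: "L \<in> carrier_mat n n" and ij: "i < n" "j < n"
  shows "isCont (\<lambda>z. cofactor (z \<cdot>\<^sub>m 1\<^sub>m n - L) i j) x"
proof -
  have "isCont (\<lambda>z. det (mat_delete (z \<cdot>\<^sub>m 1\<^sub>m n - L) i j)) x"
  proof (rule isCont_det[where m="n-1"])
    fix z show "mat_delete (z \<cdot>\<^sub>m 1\<^sub>m n - L) i j \<in> carrier_mat (n-1) (n-1)"
      using L by (auto simp: mat_delete_def)
  next
    fix a b assume ab: "a < n - 1" "b < n - 1"
    have "(\<lambda>z. mat_delete (z \<cdot>\<^sub>m 1\<^sub>m n - L) i j $$ (a,b)) =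
      (\<lambda>z. (if (if a < i then a else Suc a) = (if b < j then b else Suc b) then z else 0)
          - L $$ (if a < i then a else Suc a, if b < j then b else Suc b))"
      using L ab by (auto simp: mat_delete_def)
    have h: "\<And>c k. isCont (\<lambda>z::complex. (if c then z else 0) - k) x"
      by (case_tac c) auto
    then show "isCont (\<lambda>z. mat_delete (z \<cdot>\<^sub>m 1\<^sub>m n - L) i j $$ (a,b)) x"
      using \<open>_ = _\<close> by simp
  qed
  then show ?thesis unfolding cofactor_def by (intro continuous_intros)
qed


lemma isCont_D:
  fixes L Q :: "complex mat"
  assumes L: "L \<in> carrier_mat n n" and Q: "Q \<in> carrier_mat n n"
  shows "isCont (\<lambda>z. mtrace (Q * adj_mat (z \<cdot>\<^sub>m 1\<^sub>m n - L))) x"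
proof -
  have eq: "(\<lambda>z. mtrace (Q * adj_mat (z \<cdot>\<^sub>m 1\<^sub>m n - L))) =
     (\<lambda>z. \<Sum>i<n. \<Sum>j<n. Q $$ (i,j) * cofactor (z \<cdot>\<^sub>m 1\<^sub>m n - L) i j)"
  proof
    fix z
    show "mtrace (Q * adj_mat (z \<cdot>\<^sub>m 1\<^sub>m n - L)) = (\<Sum>i<n. \<Sum>j<n. Q $$ (i,j) * cofactor (z \<cdot>\<^sub>m 1\<^sub>m n - L) i j)"
      using L Q unfolding mtrace_def
      by (auto simp: adj_mat_def scalar_prod_def atLeast0LessThan intro!: sum.cong)
  qed
  show ?thesis unfolding eq
    by (intro continuous_sum continuous_mult continuous_const isCont_cofactor[OF L]) auto
qed

lemma mtrace_comm:
  fixes A B :: "complex mat"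
  assumes "A \<in> carrier_mat n n" "B \<in> carrier_mat n n"
  shows "mtrace (A * B) = mtrace (B * A)"
proof -
  have "mtrace (A * B) = (\<Sum>i<n. \<Sum>j<n. A $$ (i,j) * B $$ (j,i))"
    using assms unfolding mtrace_def by (auto simp: scalar_prod_def atLeast0LessThan intro!: sum.cong)
  also have "\<dots> = (\<Sum>j<n. \<Sum>i<n. B $$ (j,i) * A $$ (i,j))"
    by (subst sum.swap) (simp add: mult.commute)
  also have "\<dots> = mtrace (B * A)"
    using assms unfolding mtrace_def by (auto simp: scalar_prod_def atLeast0LessThan intro!: sum.cong)
  finally show ?thesis .
qed

lemma mtrace_diag:
  fixes W :: "complex mat"
  assumes "W \<in> carrier_mat n n"
  shows "mtrace (W * mat_diag n d) = (\<Sum>i<n. W $$ (i,i) * d i)"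
  using assms unfolding mtrace_def by (simp add: mat_diag_mult_right)

lemma det_mat_diag: "det (mat_diag n (d :: nat \<Rightarrow> complex)) = (\<Prod>i<n. d i)"
proof -
  have "upper_triangular (mat_diag n d)" unfolding upper_triangular_def mat_diag_def by auto
  then have "det (mat_diag n d) = prod_list (diag_mat (mat_diag n d))"
    by (rule det_upper_triangular[OF _ mat_diag_dim])
  also have "diag_mat (mat_diag n d) = map d [0..<n]"
    unfolding diag_mat_def mat_diag_def by auto
  also have "prod_list (map d [0..<n]) = (\<Prod>i<n. d i)"
    by (simp add: prod.distinct_set_conv_list[symmetric] atLeast0LessThan)
  finally show ?thesis .
qed

lemma char_poly_mat_diag: "char_poly (mat_diag n (d :: nat \<Rightarrow> complex)) = (\<Prod>i<n. [:- d i, 1:])"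
proof -
  have "upper_triangular (mat_diag n d)" unfolding upper_triangular_def mat_diag_def by auto
  then have "char_poly (mat_diag n d) = (\<Prod> a \<leftarrow> diag_mat (mat_diag n d). [:- a, 1:])"
    by (rule char_poly_upper_triangular[OF mat_diag_dim])
  also have "diag_mat (mat_diag n d) = map d [0..<n]"
    unfolding diag_mat_def mat_diag_def by auto
  also have "(\<Prod> a \<leftarrow> map d [0..<n]. [:- a, 1:]) = (\<Prod>i<n. [:- d i, 1:])"
    by (simp add: prod.distinct_set_conv_list[symmetric] atLeast0LessThan o_def)
  finally show ?thesis .
qed


lemma sum_collapse:
  fixes x c :: "nat \<Rightarrow> complex"
  assumes "k < n"
  shows "(\<Sum>a<n. c a * (\<Prod>j\<in>{..<n}-{a}. (x k - x j))) = c k * (\<Prod>j\<in>{..<n}-{k}. (x k - x j))"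
proof -
  have "(\<Sum>a<n. c a * (\<Prod>j\<in>{..<n}-{a}. (x k - x j))) =
     c k * (\<Prod>j\<in>{..<n}-{k}. (x k - x j)) + (\<Sum>a\<in>{..<n}-{k}. c a * (\<Prod>j\<in>{..<n}-{a}. (x k - x j)))"
    using assms by (subst sum.remove[of _ k]) auto
  also have "(\<Sum>a\<in>{..<n}-{k}. c a * (\<Prod>j\<in>{..<n}-{a}. (x k - x j))) = 0"
  proof (rule sum.neutral, intro ballI)
    fix a assume "a \<in> {..<n} - {k}"
    then have "k \<in> {..<n} - {a}" using assms by auto
    then have "(\<Prod>j\<in>{..<n}-{a}. (x k - x j)) = 0" by (intro prod_zero) auto
    then show "c a * (\<Prod>j\<in>{..<n}-{a}. (x k - x j)) = 0" by simp
  qed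
  finally show ?thesis by simp
qed

lemma sandwich_smult:
  fixes U V :: "complex mat"
  assumes Vc: "V \<in> carrier_mat n n" and Uc: "U \<in> carrier_mat n n" and VU: "V * U = 1\<^sub>m n"
  shows "V * (c \<cdot>\<^sub>m 1\<^sub>m n) * U = c \<cdot>\<^sub>m 1\<^sub>m n"
proof -
  have "V * (c \<cdot>\<^sub>m 1\<^sub>m n) = c \<cdot>\<^sub>m V" using mult_smult_distrib[OF Vc one_carrier_mat] Vc by simp
  then show ?thesis using mult_smult_assoc_mat[OF Vc Uc] VU by simp
qed

theorem mainTheorem1:
  fixes n :: nat and g :: real and q p lambda :: "nat \<Rightarrow> real" and U :: "complex mat"
  assumes "g \<noteq> 0"
    and q_dec: "\<And>j k. j < k \<Longrightarrow> k < n \<Longrightarrow> q j > q k"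
    and lam_dec: "\<And>j k. j < k \<Longrightarrow> k < n \<Longrightarrow> lambda j > lambda k"
    and U: "unitary_mat n U"
    and diag: "U * CM_L n g q p * ctrans U = mat_diag n (\<lambda>j. complex_of_real (lambda j))"
    and "k < n"
  shows "CM_D n g q p (complex_of_real (lambda k)) / poly (pderiv (CM_A n g q p)) (complex_of_real (lambda k))
         = (U * CM_Q n q * ctrans U) $$ (k,k)"
proof -
  define lc where "lc = (\<lambda>j. complex_of_real (lambda j))"
  define Lam where "Lam = mat_diag n lc"
  define V where "V = ctrans U"
  define L where "L = CM_L n g q p"
  define Q where "Q = CM_Q n q"
  define W where "W = U * Q * V"
  have Uc: "U \<in> carrier_mat n n" and UV: "U * V = 1\<^sub>m n" and VU: "V * U = 1\<^sub>m n"
    using U unfolding unitary_mat_def V_def by auto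
  have Vc: "V \<in> carrier_mat n n" using Uc unfolding V_def ctrans_def by auto
  have Lc: "L \<in> carrier_mat n n" unfolding L_def CM_L_def by auto
  have Qc: "Q \<in> carrier_mat n n" unfolding Q_def CM_Q_def by auto
  have Lamc: "Lam \<in> carrier_mat n n" unfolding Lam_def by simp
  have diag': "U * L * V = Lam" using diag unfolding L_def V_def Lam_def lc_def .
  have hL: "L = V * Lam * U"
  proof -
    have "V * Lam * U = V * (U * L * V) * U" by (simp add: diag')
    also have "\<dots> = (V * U) * L * (V * U)"
      using Uc Vc Lc by (simp add: assoc_mult_mat[of _ n n _ n _ n])
    also have "\<dots> = L" using VU Lc by simp
    finally show ?thesis by simp
  qed
  have inj: "\<And>j. j < n \<Longrightarrow> j \<noteq> k \<Longrightarrow> lc k \<noteq> lc j"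
  proof -
    fix j assume j: "j < n" "j \<noteq> k"
    then have "lambda j \<noteq> lambda k" using lam_dec[of j k] lam_dec[of k j] \<open>k < n\<close>
      by (cases "j < k") auto
    then show "lc k \<noteq> lc j" unfolding lc_def by simp
  qed
  define Pk where "Pk = (\<Prod>j\<in>{..<n}-{k}. (lc k - lc j))"
  have Pk0: "Pk \<noteq> 0" unfolding Pk_def using inj by (subst prod_zero_iff) auto
  have "similar_mat L Lam"
    by (rule similar_matI[where P=V and Q=U and n=n]) (use Lc Lamc Vc Uc VU UV hL in auto)
  then have cpA: "CM_A n g q p = (\<Prod>i<n. [:- lc i, 1:])"
    unfolding CM_A_def L_def[symmetric] by (simp add: char_poly_similar char_poly_mat_diag Lam_def)
  have Aprime: "poly (pderiv (CM_A n g q p)) (lc k) = Pk"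
  proof -
    have "poly (pderiv (CM_A n g q p)) (lc k) = (\<Sum>a<n. 1 * (\<Prod>j\<in>{..<n}-{a}. (lc k - lc j)))"
      unfolding cpA pderiv_prod by (simp add: poly_sum poly_prod pderiv_pCons)
    also have "\<dots> = Pk" unfolding Pk_def by (subst sum_collapse[OF \<open>k < n\<close>]) simp
    finally show ?thesis .
  qed
  define G where "G = (\<lambda>z. \<Sum>i<n. W $$ (i,i) * (\<Prod>j\<in>{..<n}-{i}. (z - lc j)))"
  have GK: "G (lc k) = W $$ (k,k) * Pk"
    unfolding G_def Pk_def by (rule sum_collapse[OF \<open>k < n\<close>])
  have generic: "CM_D n g q p z = G z" if z: "\<forall>i<n. z \<noteq> lc i" for z
  proof -
    define N where "N = mat_diag n (\<lambda>i. z - lc i)"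
    define M where "M = z \<cdot>\<^sub>m 1\<^sub>m n - L"
    have Nc: "N \<in> carrier_mat n n" unfolding N_def by simp
    have Mc: "M \<in> carrier_mat n n" unfolding M_def using Lc by (simp add: minus_carrier_mat)
    have NL: "N = z \<cdot>\<^sub>m 1\<^sub>m n - Lam"
      by (rule eq_matI) (auto simp: N_def Lam_def mat_diag_def)
    have hM: "M = V * N * U"
    proof -
      have "V * N * U = (V * (z \<cdot>\<^sub>m 1\<^sub>m n) - V * Lam) * U"
        unfolding NL by (subst mult_minus_distrib_mat[OF Vc _ Lamc]) auto
      also have "\<dots> = V * (z \<cdot>\<^sub>m 1\<^sub>m n) * U - V * Lam * U"
        using Vc Lamc Uc by (subst minus_mult_distrib_mat[OF _ _ Uc]) auto
      also have "V * (z \<cdot>\<^sub>m 1\<^sub>m n) * U = z \<cdot>\<^sub>m 1\<^sub>m n"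
        using sandwich_smult[OF Vc Uc VU] .
      finally show ?thesis unfolding M_def hL by simp
    qed
    have detN: "det N = (\<Prod>i<n. (z - lc i))" unfolding N_def by (rule det_mat_diag)
    have detN0: "det N \<noteq> 0" unfolding detN using z by (subst prod_zero_iff) auto
    have detVU: "det V * det U = 1"
      using det_mult[OF Vc Uc] VU by simp
    have detM: "det M = det N"
      unfolding hM using det_mult[OF mult_carrier_mat[OF Vc Nc] Uc] det_mult[OF Vc Nc] detVU
      by (simp add: algebra_simps)
    define adjN where "adjN = mat_diag n (\<lambda>i. det N / (z - lc i))"
    have adjNc: "adjN \<in> carrier_mat n n" unfolding adjN_def by simp
    have NadjN: "N * adjN = det N \<cdot>\<^sub>m 1\<^sub>m n"
    proof -
      have "N * adjN = mat_diag n (\<lambda>i. (z - lc i) * (det N / (z - lc i)))"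
        unfolding adjN_def N_def by (rule mat_diag_diag)
      also have "\<dots> = det N \<cdot>\<^sub>m 1\<^sub>m n"
        by (rule eq_matI) (use z in \<open>auto simp: mat_diag_def\<close>)
      finally show ?thesis .
    qed
    define X where "X = V * adjN * U"
    have Xc: "X \<in> carrier_mat n n" unfolding X_def using Vc adjNc Uc by simp
    have MX: "M * X = det M \<cdot>\<^sub>m 1\<^sub>m n"
    proof -
      have "M * X = V * (N * (U * V) * adjN) * U"
        unfolding hM X_def using Vc Nc Uc adjNc by (simp add: assoc_mult_mat[of _ n n _ n _ n])
      also have "\<dots> = V * (det N \<cdot>\<^sub>m 1\<^sub>m n) * U" using UV Nc NadjN by simp
      also have "\<dots> = det N \<cdot>\<^sub>m 1\<^sub>m n"
        using sandwich_smult[OF Vc Uc VU] .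
      finally show ?thesis using detM by simp
    qed
    have adjM: "adj_mat M = X"
    proof -
      have aM: "adj_mat M \<in> carrier_mat n n" "adj_mat M * M = det M \<cdot>\<^sub>m 1\<^sub>m n"
        using adj_mat[OF Mc] by auto
      have "det M \<cdot>\<^sub>m X = (adj_mat M * M) * X" using aM Xc mult_smult_assoc_mat[OF one_carrier_mat Xc, of "det M"] by simp
      also have "\<dots> = adj_mat M * (M * X)" by (rule assoc_mult_mat[OF aM(1) Mc Xc])
      also have "\<dots> = det M \<cdot>\<^sub>m adj_mat M" unfolding MX using aM mult_smult_distrib[OF aM(1) one_carrier_mat, of "det M"] by simp
      finally have eq: "det M \<cdot>\<^sub>m X = det M \<cdot>\<^sub>m adj_mat M" .
      show ?thesis
      proof (rule eq_matI)
        fix i j assume "i < dim_row X" "j < dim_col X"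
        then have ij: "i < n" "j < n" using Xc by auto
        have "det M * X $$ (i,j) = det M * adj_mat M $$ (i,j)"
          using arg_cong[OF eq, of "\<lambda>A. A $$ (i,j)"] ij Xc aM by simp
        then show "adj_mat M $$ (i,j) = X $$ (i,j)" using detN0 detM by simp
      qed (use aM Xc in auto)
    qed
    have "CM_D n g q p z = mtrace (Q * X)"
      unfolding CM_D_def Q_def[symmetric] L_def[symmetric] M_def[symmetric] adjM ..
    also have "mtrace (Q * X) = mtrace ((Q * V * adjN) * U)"
      unfolding X_def using Qc Vc adjNc Uc by (simp add: assoc_mult_mat[of _ n n _ n _ n])
    also have "\<dots> = mtrace (U * (Q * V * adjN))"
      by (rule mtrace_comm) (use Qc Vc adjNc Uc in auto)
    also have "\<dots> = mtrace (W * adjN)"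
      unfolding W_def using Qc Vc adjNc Uc by (simp add: assoc_mult_mat[of _ n n _ n _ n])
    also have "\<dots> = (\<Sum>i<n. W $$ (i,i) * (det N / (z - lc i)))"
      unfolding adjN_def by (rule mtrace_diag) (use Qc Vc Uc in \<open>simp add: W_def\<close>)
    also have "\<dots> = G z"
      unfolding G_def detN
    proof (rule sum.cong[OF refl])
      fix i assume i: "i \<in> {..<n}"
      have "(\<Prod>i<n. (z - lc i)) = (z - lc i) * (\<Prod>j\<in>{..<n}-{i}. (z - lc j))"
        using i by (subst prod.remove[of _ i]) auto
      then show "W $$ (i,i) * ((\<Prod>i<n. (z - lc i)) / (z - lc i)) = W $$ (i,i) * (\<Prod>j\<in>{..<n}-{i}. (z - lc j))"
        using z i by simp
    qed
    finally show ?thesis .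
  qed
  have cD: "isCont (\<lambda>z. CM_D n g q p z) (lc k)"
    unfolding CM_D_def using isCont_D[OF Lc Qc] unfolding L_def Q_def .
  have cG: "isCont G (lc k)" unfolding G_def by (intro continuous_intros)
  have ev: "\<forall>\<^sub>F z in at (lc k). \<forall>i\<in>{..<n}. z \<noteq> lc i"
    by (intro eventually_ball_finite ballI eventually_neq_at_within) auto
  have "\<forall>\<^sub>F z in at (lc k). CM_D n g q p z = G z"
    using ev by eventually_elim (use generic in auto)
  moreover have "((\<lambda>z. CM_D n g q p z) \<longlongrightarrow> CM_D n g q p (lc k)) (at (lc k))"
    using cD by (simp add: isCont_def)
  ultimately have "(G \<longlongrightarrow> CM_D n g q p (lc k)) (at (lc k))"
    using Lim_transform_eventually by blast
  moreover have "(G \<longlongrightarrow> G (lc k)) (at (lc k))" using cG by (simp add: isCont_def)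
  ultimately have DG: "CM_D n g q p (lc k) = G (lc k)"
    by (intro tendsto_unique[OF at_neq_bot])
  show ?thesis
    using DG GK Aprime Pk0 unfolding lc_def W_def V_def Q_def by simp
qed

end
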